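(* Let $\lambda \geq 1$, $\mu \geq 0$, $\delta \geq 0$, $t\in\left(\tfrac12,1\right)$ and $\xi=\frac{2\lambda+\mu}{2\lambda+1}$. Let $f(z)=z+\sum_{n=2}^{\infty}a_n z^n$ belong to the class $\mathscr{B}_{\Sigma}^{\mu}(\lambda,\delta,t)$ defined below. Then \[ |a_{3}-a_{2}^{2}|\leq \frac{2t}{2\lambda +\mu+6\xi\delta}. \]
   Context: Let $\mathbb{U}=\{z\in\mathbb{C}:|z|<1\}$ and let $\mathcal{A}$ be the class of analytic functions $f$ on $\mathbb{U}$ with $f(0)=0$, $f'(0)=1$, i.e. $f(z)=z+\sum_{n\ge2}a_nz^n$. A function $f\in\mathcal{A}$ is bi-univalent if $f$ is univalent on $\mathbb{U}$ and its inverse $g=f^{-1}$ (defined near $0$, with $f^{-1}(f(z))=z$, and $g(w)=w-a_2w^2+(2a_2^2-a_3)w^3-\cdots$) extends to a univalent function on $\mathbb{U}$; $\Sigma$ denotes the class of such $f$. For analytic $F,G$ on $\mathbb{U}$, $F\prec G$ (subordination) means there is an analytic $\omega$ on $\mathbb{U}$ with $\omega(0)=0$, $|\omega(z)|<1$ and $F=G\circ\omega$. The Chebyshev polynomials of the second kind are $U_0(t)=1$, $U_1(t)=2t$, $U_{n+1}(t)=2tU_n(t)-U_{n-1}(t)$, with generating function $H(z,t)=\frac{1}{1-2tz+z^2}=\sum_{n\ge0}U_n(t)z^n$. For $\lambda\ge1,\mu\ge0,\delta\ge0$, $t\in(\frac12,1)$ and $\xi=\frac{2\lambda+\mu}{2\lambda+1}$,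 the class $\mathscr{B}_{\Sigma}^{\mu}(\lambda,\delta,t)$ consists of all $f\in\Sigma$ such that, with $g=f^{-1}$, \[ (1-\lambda)\left(\tfrac{f(z)}{z}\right)^{\mu}+\lambda f'(z)\left(\tfrac{f(z)}{z}\right)^{\mu-1}+\xi\delta z f''(z)\prec H(z,t) \] and \[ (1-\lambda)\left(\tfrac{g(w)}{w}\right)^{\mu}+\lambda g'(w)\left(\tfrac{g(w)}{w}\right)^{\mu-1}+\xi\delta w g''(w)\prec H(w,t), \] where powers are taken with the principal branch equal to $1$ at the origin. *)

theory Defs
  imports "HOL-Complex_Analysis.Complex_Analysis"
begin

definition subordinate :: "(complex \<Rightarrow> complex) \<Rightarrow> (complex \<Rightarrow> complex) \<Rightarrow> bool" where
  "subordinate F G \<longleftrightarrow>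
     (\<exists>\<omega>. \<omega> holomorphic_on ball 0 1 \<and> \<omega> 0 = 0 \<and>
          (\<forall>z\<in>ball 0 1. norm (\<omega> z) < 1 \<and> F z = G (\<omega> z)))"

text \<open>Generating function of Chebyshev polynomials of the second kind.\<close>
definition chebH :: "complex \<Rightarrow> real \<Rightarrow> complex" where
  "chebH z t = 1 / (1 - 2 * of_real t * z + z ^ 2)"

definition classA :: "(complex \<Rightarrow> complex) \<Rightarrow> bool" where
  "classA f \<longleftrightarrow> f holomorphic_on ball 0 1 \<and> f 0 = 0 \<and> deriv f 0 = 1"

text \<open>f is bi-univalent and g is the univalent extension of its inverse to the unit disc.\<close>
definition bi_univalent_with :: "(complex \<Rightarrow> complex) \<Rightarrow> (complex \<Rightarrow> complex) \<Rightarrow> bool" where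
  "bi_univalent_with f g \<longleftrightarrow>
     classA f \<and> inj_on f (ball 0 1) \<and>
     g holomorphic_on ball 0 1 \<and> inj_on g (ball 0 1) \<and>
     (\<exists>r>0. \<forall>z\<in>ball 0 r. f z \<in> ball 0 1 \<and> g (f z) = z) \<and>
     (\<exists>r>0. \<forall>w\<in>ball 0 r. g w \<in> ball 0 1 \<and> f (g w) = w)"

definition bi_univalent :: "(complex \<Rightarrow> complex) \<Rightarrow> bool" where
  "bi_univalent f \<longleftrightarrow> (\<exists>g. bi_univalent_with f g)"

definition xi :: "real \<Rightarrow> real \<Rightarrow> real" where
  "xi lam mu = (2 * lam + mu) / (2 * lam + 1)"

text \<open>The subordination condition for a function h. Powers (h z / z) powers are taken
  via the analytic branch L of log (h z / z) on the disc with L 0 = 0.\<close>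
definition B_condition :: "real \<Rightarrow> real \<Rightarrow> real \<Rightarrow> real \<Rightarrow> (complex \<Rightarrow> complex) \<Rightarrow> bool" where
  "B_condition lam mu del t h \<longleftrightarrow>
     (\<exists>L. L holomorphic_on ball 0 1 \<and> L 0 = 0 \<and>
          (\<forall>z\<in>ball 0 1 - {0}. exp (L z) = h z / z) \<and>
          subordinate
            (\<lambda>z. (1 - of_real lam) * exp (of_real mu * L z)
                 + of_real lam * deriv h z * exp (of_real (mu - 1) * L z)
                 + of_real (xi lam mu * del) * z * deriv (deriv h) z)
            (\<lambda>z. chebH z t))"

definition classB :: "real \<Rightarrow> real \<Rightarrow> real \<Rightarrow> real \<Rightarrow> (complex \<Rightarrow> complex) \<Rightarrow> bool" where
  "classB mu lam del t f \<longleftrightarrow>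
     (\<exists>g. bi_univalent_with f g \<and> B_condition lam mu del t f \<and> B_condition lam mu del t g)"

definition taylor_coeff :: "(complex \<Rightarrow> complex) \<Rightarrow> nat \<Rightarrow> complex" where
  "taylor_coeff f n = (deriv ^^ n) f 0 / of_nat (fact n)"

end

theory Submission
  imports Defs
begin


lemma hfe: "h holomorphic_on ball 0 1 \<Longrightarrow> h has_fps_expansion fps_expansion h 0"
  by (rule has_fps_expansion_fps_expansion[of "ball 0 1"]) auto

lemma ev_ball: "\<forall>\<^sub>F z in nhds (0::complex). z \<in> ball 0 1"
  by (intro eventually_nhds_in_open) auto

lemma comp_exp_coeffs:
  fixes Ls :: "complex fps"
  assumes "fps_nth Ls 0 = 0"
  shows "fps_nth (fps_exp c oo Ls) 0 = 1" "fps_nth (fps_exp c oo Ls) 1 = c * fps_nth Ls 1"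
    "fps_nth (fps_exp c oo Ls) 2 = c * fps_nth Ls 2 + c^2/2 * (fps_nth Ls 1)^2"
    "fps_nth (fps_exp c oo Ls) 3 = c * fps_nth Ls 3 + c^2 * fps_nth Ls 1 * fps_nth Ls 2 + c^3/6 * (fps_nth Ls 1)^3"
  using assms by (simp_all add: fps_compose_nth fps_mult_nth numeral_3_eq_3 numeral_2_eq_2 power_Suc field_simps)

lemma den_nz:
  fixes w :: complex and t :: real
  assumes "norm w < 1" "1/2 < t" "t < 1"
  shows "1 - 2 * of_real t * w + w^2 \<noteq> 0"
proof
  assume h: "1 - 2 * of_real t * w + w^2 = 0"
  have re: "1 - 2*t*Re w + (Re w)^2 - (Im w)^2 = 0" using arg_cong[OF h, of Re] by (simp add: power2_eq_square)
  have im: "- 2*t*Im w + 2 * Re w * Im w = 0" using arg_cong[OF h, of Im] by (simp add: power2_eq_square)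
  have n: "(Re w)^2 + (Im w)^2 < 1" proof -
    have "(norm w)^2 < 1" using assms(1) by (simp add: power_less_one_iff abs_less_iff) 
    then show ?thesis by (simp add: cmod_power2)
  qed
  show False
  proof (cases "Im w = 0")
    case True
    have e: "1 - 2*t*Re w + (Re w)^2 = (Re w - t)^2 + (1 - t^2)" by (simp add: power2_eq_square algebra_simps)
    have "t^2 < 1" using assms by (simp add: power_less_one_iff abs_less_iff)
    then have "(Re w - t)^2 + (1 - t^2) > 0" by (smt (verit) zero_le_power2)
    then show ?thesis using re True e by simp
  next
    case False
    then have "Re w = t" using im by (simp add: algebra_simps)
    then show ?thesis using re n by (simp add: power2_eq_square) 
  qed
qed



lemma core:
  fixes lam mu del t :: real and h L \<omega> :: "complex \<Rightarrow> complex"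
  assumes t: "1/2 < t" "t < 1"
    and hh: "h holomorphic_on ball 0 1" and h0: "h 0 = 0"
    and Lh: "L holomorphic_on ball 0 1" and L0: "L 0 = 0"
    and Le: "\<forall>z\<in>ball 0 1 - {0}. exp (L z) = h z / z"
    and wh: "\<omega> holomorphic_on ball 0 1" and w0: "\<omega> 0 = 0"
    and wb: "\<forall>z\<in>ball 0 1. norm (\<omega> z) < 1 \<and>
        (1 - of_real lam) * exp (of_real mu * L z)
                 + of_real lam * deriv h z * exp (of_real (mu - 1) * L z)
                 + of_real (xi lam mu * del) * z * deriv (deriv h) z = chebH (\<omega> z) t"
  defines "Hs \<equiv> fps_expansion h 0" and "Ws \<equiv> fps_expansion \<omega> 0"
  shows "of_real (mu + lam + 2 * xi lam mu * del) * fps_nth Hs 2 = 2 * of_real t * fps_nth Ws 1"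
    "of_real (mu + 2*lam + 6 * xi lam mu * del) * fps_nth Hs 3 + of_real ((mu + 2*lam)*(mu - 1)/2) * (fps_nth Hs 2)^2
       = 2 * of_real t * fps_nth Ws 2 + of_real (4*t^2 - 1) * (fps_nth Ws 1)^2"
proof -
  define Ls where "Ls = fps_expansion L 0"
  have HH: "h has_fps_expansion Hs" unfolding Hs_def using hh by (rule hfe)
  have LL: "L has_fps_expansion Ls" unfolding Ls_def using Lh by (rule hfe)
  have WW: "\<omega> has_fps_expansion Ws" unfolding Ws_def using wh by (rule hfe)
  have Ls0: "fps_nth Ls 0 = 0" using fps_nth_fps_expansion[OF LL, of 0] L0 by simp
  have Ws0: "fps_nth Ws 0 = 0" using fps_nth_fps_expansion[OF WW, of 0] w0 by simp
  have EX: "(\<lambda>z. exp (c * L z)) has_fps_expansion (fps_exp c oo Ls)" for c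
  proof -
    have "((\<lambda>x. exp (c * x)) \<circ> L) has_fps_expansion (fps_exp c oo Ls)"
      by (rule has_fps_expansion_compose[OF has_fps_expansion_exp LL Ls0])
    then show ?thesis by (simp add: o_def)
  qed
  have hz: "h z = z * exp (L z)" if "z \<in> ball 0 1" for z
    using Le that h0 by (cases "z = 0") auto
  have "(\<lambda>z. z * exp (1 * L z)) has_fps_expansion fps_X * (fps_exp 1 oo Ls)"
    by (intro has_fps_expansion_mult EX has_fps_expansion_fps_X)
  then have "h has_fps_expansion fps_X * (fps_exp 1 oo Ls)"
    by (rule has_fps_expansion_cong[THEN iffD1, rotated -1])
       (use ev_ball in \<open>auto elim!: eventually_mono simp: hz\<close>)
  then have HsE: "Hs = fps_X * (fps_exp 1 oo Ls)" using HH fps_expansion_unique_complex by blast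
  have H1: "fps_nth Hs 1 = 1" and H2: "fps_nth Hs 2 = fps_nth Ls 1" and H3: "fps_nth Hs 3 = fps_nth Ls 2 + (fps_nth Ls 1)^2 / 2"
    using comp_exp_coeffs[OF Ls0, of 1] by (simp_all add: HsE numeral_3_eq_3 numeral_2_eq_2)
  have Hs0: "fps_nth Hs 0 = 0" by (simp add: HsE)
  define c :: complex where "c = of_real (xi lam mu * del)"
  define Fs where "Fs = fps_const (1 - of_real lam) * (fps_exp (of_real mu) oo Ls)
     + fps_const (of_real lam) * fps_deriv Hs * (fps_exp (of_real (mu - 1)) oo Ls)
     + fps_const c * fps_X * fps_deriv (fps_deriv Hs)"
  define Ds where "Ds = 1 - fps_const (2 * of_real t) * Ws + Ws ^ 2"
  have FF: "(\<lambda>z. (1 - of_real lam) * exp (of_real mu * L z)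
                 + of_real lam * deriv h z * exp (of_real (mu - 1) * L z)
                 + c * z * deriv (deriv h) z) has_fps_expansion Fs"
    unfolding Fs_def
    by (intro has_fps_expansion_add has_fps_expansion_mult has_fps_expansion_const EX
          has_fps_expansion_deriv HH has_fps_expansion_fps_X)
  have DD: "(\<lambda>z. 1 - 2 * of_real t * \<omega> z + \<omega> z ^ 2) has_fps_expansion Ds"
    unfolding Ds_def
    by (intro has_fps_expansion_add has_fps_expansion_diff has_fps_expansion_mult has_fps_expansion_const has_fps_expansion_1
          has_fps_expansion_power WW)
  have PR: "(\<lambda>z. ((1 - of_real lam) * exp (of_real mu * L z)
                 + of_real lam * deriv h z * exp (of_real (mu - 1) * L z)
                 + c * z * deriv (deriv h) z) * (1 - 2 * of_real t * \<omega> z + \<omega> z ^ 2)) has_fps_expansion Fs * Ds"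
    by (rule has_fps_expansion_mult[OF FF DD])
  have EV: "\<forall>\<^sub>F z in nhds 0. ((1 - of_real lam) * exp (of_real mu * L z)
                 + of_real lam * deriv h z * exp (of_real (mu - 1) * L z)
                 + c * z * deriv (deriv h) z) * (1 - 2 * of_real t * \<omega> z + \<omega> z ^ 2) = 1"
    using ev_ball
  proof eventually_elim
    case (elim z)
    then have "norm (\<omega> z) < 1" and eq: "(1 - of_real lam) * exp (of_real mu * L z)
                 + of_real lam * deriv h z * exp (of_real (mu - 1) * L z)
                 + c * z * deriv (deriv h) z = chebH (\<omega> z) t"
      using wb c_def by auto
    then have "1 - 2 * of_real t * \<omega> z + \<omega> z ^ 2 \<noteq> 0" using den_nz t by blast
    then show ?case unfolding eq chebH_def by simp
  qed
  have "(\<lambda>z. 1) has_fps_expansion Fs * Ds"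
    using has_fps_expansion_cong[THEN iffD1, OF EV refl PR] .
  then have FD: "Fs * Ds = 1"
    using fps_expansion_unique_complex has_fps_expansion_1 by blast
  have FD1: "fps_nth (Fs * Ds) 1 = 0" and FD2: "fps_nth (Fs * Ds) 2 = 0" by (simp_all add: FD)
  note cc = comp_exp_coeffs[OF Ls0]
  note S = numeral_3_eq_3 numeral_2_eq_2 One_nat_def
  note ccS = cc[unfolded S] and HS = H1[unfolded S] H2[unfolded S] H3[unfolded S]
  have F0: "fps_nth Fs 0 = 1"
    unfolding Fs_def by (simp add: ccS HS)
  have F1: "fps_nth Fs 1 = (of_real mu + of_real lam + 2 * c) * fps_nth Hs 2"
    unfolding Fs_def by (simp add: fps_mult_nth ccS HS Hs0 S algebra_simps)
  have F2: "fps_nth Fs 2 = (of_real mu + 2 * of_real lam + 6 * c) * fps_nth Hs 3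
      + (of_real mu + 2 * of_real lam) * (of_real mu - 1) / 2 * (fps_nth Hs 2)^2"
    unfolding Fs_def apply (simp add: fps_mult_nth ccS HS Hs0 S power2_eq_square)
    by (simp add: field_simps)
  have D0: "fps_nth Ds 0 = 1" and D1: "fps_nth Ds 1 = - 2 * of_real t * fps_nth Ws 1"
    and D2: "fps_nth Ds 2 = - 2 * of_real t * fps_nth Ws 2 + (fps_nth Ws 1)^2"
    unfolding Ds_def by (simp_all add: fps_mult_nth Ws0 S power2_eq_square)
  have E1: "fps_nth Fs 1 = 2 * of_real t * fps_nth Ws 1"
    using FD1 unfolding fps_mult_nth by (simp add: S F0 D0 D1[unfolded S] F1[unfolded S])
  have E2: "fps_nth Fs 2 = 2 * of_real t * fps_nth Ws 2 + (4 * (of_real t)^2 - 1) * (fps_nth Ws 1)^2"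
    using FD2 unfolding fps_mult_nth apply (simp add: S F0 D0 D1[unfolded S] D2[unfolded S] E1[unfolded S])
    by algebra
  show "of_real (mu + lam + 2 * xi lam mu * del) * fps_nth Hs 2 = 2 * of_real t * fps_nth Ws 1"
    using E1 F1 by (simp add: c_def)
  show "of_real (mu + 2*lam + 6 * xi lam mu * del) * fps_nth Hs 3 + of_real ((mu + 2*lam)*(mu - 1)/2) * (fps_nth Hs 2)^2
       = 2 * of_real t * fps_nth Ws 2 + of_real (4*t^2 - 1) * (fps_nth Ws 1)^2"
    using E2 F2 by (simp add: c_def mult.assoc)
qed



lemma schwarz2:
  assumes wh: "\<omega> holomorphic_on ball 0 1" and wb: "\<forall>z\<in>ball 0 1. norm (\<omega> z) < 1"
  shows "norm (fps_nth (fps_expansion \<omega> 0) 2) \<le> 1"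
proof -
  define A where "A = norm ((deriv ^^ 2) \<omega> 0)"
  have bnd: "A * r^2 \<le> 2" if r: "0 < r" "r < 1" for r :: real
  proof -
    have "A \<le> fact 2 * 1 / r^2" unfolding A_def
    proof (rule Cauchy_higher_deriv_bound)
      show "\<omega> holomorphic_on ball 0 r" using r by (intro holomorphic_on_subset[OF wh]) auto
      have "\<omega> holomorphic_on cball 0 r" using r by (intro holomorphic_on_subset[OF wh]) auto
      then show "continuous_on (cball 0 r) \<omega>" by (rule holomorphic_on_imp_continuous_on)
      show "\<omega> w \<in> ball 0 1" if "w \<in> ball 0 r" for w using wb that r by auto
    qed (use r in auto)
    then show ?thesis using r by (simp add: field_simps)
  qed
  have "A \<le> 2"
  proof (rule ccontr)
    assume "\<not> A \<le> 2"
    then have A2: "A > 2" by simp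
    define r where "r = sqrt ((2 / A + 1) / 2)"
    have q: "2 / A < 1" using A2 by simp
    have q0: "0 < 2 / A" using A2 by simp
    have p: "0 < 2 / A + 1" using q0 by linarith
    have r2: "r^2 = (2 / A + 1) / 2" proof -
      have "0 < 2 / A + 1" using q0 by linarith
      then show ?thesis unfolding r_def by simp
    qed
    have "0 < r" unfolding r_def using p by simp
    moreover have "r < 1" unfolding r_def using q by simp 
    ultimately have "A * r^2 \<le> 2" by (rule bnd)
    moreover have "A * r^2 > 2" unfolding r2 using A2 q by (simp add: field_simps)
    ultimately show False by simp
  qed
  then show ?thesis unfolding A_def by (simp add: fps_expansion_def)
qed



lemma inv_coeffs:
  fixes f g :: "complex \<Rightarrow> complex"
  assumes F: "f has_fps_expansion Fs" and G: "g has_fps_expansion Gs"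
    and F0: "fps_nth Fs 0 = 0"
    and ev: "\<forall>\<^sub>F z in nhds 0. g (f z) = z"
  shows "fps_nth Gs 1 * fps_nth Fs 1 = 1"
    "fps_nth Gs 1 * fps_nth Fs 2 + fps_nth Gs 2 * (fps_nth Fs 1)^2 = 0"
    "fps_nth Gs 1 * fps_nth Fs 3 + 2 * fps_nth Gs 2 * fps_nth Fs 1 * fps_nth Fs 2 + fps_nth Gs 3 * (fps_nth Fs 1)^3 = 0"
proof -
  have "(g \<circ> f) has_fps_expansion fps_compose Gs Fs"
    by (rule has_fps_expansion_compose[OF G F F0])
  moreover have "(\<lambda>z. z) has_fps_expansion fps_X" by (rule has_fps_expansion_fps_X)
  moreover have "\<forall>\<^sub>F z in nhds 0. z = (g \<circ> f) z" using ev by (auto simp: o_def elim: eventually_mono)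
  ultimately have "(g \<circ> f) has_fps_expansion fps_X"
    using has_fps_expansion_cong[THEN iffD1, of "\<lambda>z. z" "g \<circ> f" fps_X fps_X] by blast
  then have E: "fps_compose Gs Fs = fps_X"
    using \<open>(g \<circ> f) has_fps_expansion fps_compose Gs Fs\<close> fps_expansion_unique_complex by blast
  note S = numeral_3_eq_3 numeral_2_eq_2 One_nat_def
  have "fps_nth (fps_compose Gs Fs) 1 = 1" "fps_nth (fps_compose Gs Fs) 2 = 0"
    "fps_nth (fps_compose Gs Fs) 3 = 0" by (simp_all add: E)
  then show "fps_nth Gs 1 * fps_nth Fs 1 = 1"
    "fps_nth Gs 1 * fps_nth Fs 2 + fps_nth Gs 2 * (fps_nth Fs 1)^2 = 0"
    "fps_nth Gs 1 * fps_nth Fs 3 + 2 * fps_nth Gs 2 * fps_nth Fs 1 * fps_nth Fs 2 + fps_nth Gs 3 * (fps_nth Fs 1)^3 = 0"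
    by (simp_all add: fps_compose_nth fps_mult_nth S F0 power_Suc algebra_simps)
qed



theorem mainTheorem3:
  fixes lam mu del t :: real and f :: "complex \<Rightarrow> complex"
  assumes "lam \<ge> 1" and "mu \<ge> 0" and "del \<ge> 0" and "1/2 < t" and "t < 1"
    and "classB mu lam del t f"
  shows "norm (taylor_coeff f 3 - (taylor_coeff f 2)^2) \<le> 2 * t / (2 * lam + mu + 6 * xi lam mu * del)"
proof -
  obtain g where bu: "bi_univalent_with f g" and Bf: "B_condition lam mu del t f"
    and Bg: "B_condition lam mu del t g" using assms(6) unfolding classB_def by blast
  have fh: "f holomorphic_on ball 0 1" and f0: "f 0 = 0" and gh: "g holomorphic_on ball 0 1"
    using bu unfolding bi_univalent_with_def classA_def by auto
  obtain r where r: "r > 0" "\<forall>z\<in>ball 0 r. f z \<in> ball 0 1 \<and> g (f z) = z"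
    using bu unfolding bi_univalent_with_def by blast
  have g0: "g 0 = 0" using r(2)[rule_format, of 0] r(1) f0 by simp
  have ev: "\<forall>\<^sub>F z in nhds 0. g (f z) = z"
    using eventually_nhds_in_open[of "ball 0 r" 0] r by (auto elim: eventually_mono)
  define Hs where "Hs = fps_expansion f 0"
  define Gs where "Gs = fps_expansion g 0"
  have HH: "f has_fps_expansion Hs" unfolding Hs_def using fh by (rule hfe)
  have GG: "g has_fps_expansion Gs" unfolding Gs_def using gh by (rule hfe)
  have Hs0: "fps_nth Hs 0 = 0" using fps_nth_fps_expansion[OF HH, of 0] f0 by simp
  obtain Lf \<omega> where Lf: "Lf holomorphic_on ball 0 1" "Lf 0 = 0" "\<forall>z\<in>ball 0 1 - {0}. exp (Lf z) = f z / z"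
    and wf: "\<omega> holomorphic_on ball 0 1" "\<omega> 0 = 0"
    and wfb: "\<forall>z\<in>ball 0 1. norm (\<omega> z) < 1 \<and>
        (1 - of_real lam) * exp (of_real mu * Lf z)
                 + of_real lam * deriv f z * exp (of_real (mu - 1) * Lf z)
                 + of_real (xi lam mu * del) * z * deriv (deriv f) z = chebH (\<omega> z) t"
    using Bf unfolding B_condition_def subordinate_def by blast
  obtain Lg \<nu> where Lg: "Lg holomorphic_on ball 0 1" "Lg 0 = 0" "\<forall>z\<in>ball 0 1 - {0}. exp (Lg z) = g z / z"
    and wg: "\<nu> holomorphic_on ball 0 1" "\<nu> 0 = 0"
    and wgb: "\<forall>z\<in>ball 0 1. norm (\<nu> z) < 1 \<and>
        (1 - of_real lam) * exp (of_real mu * Lg z)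
                 + of_real lam * deriv g z * exp (of_real (mu - 1) * Lg z)
                 + of_real (xi lam mu * del) * z * deriv (deriv g) z = chebH (\<nu> z) t"
    using Bg unfolding B_condition_def subordinate_def by blast
  note cf = core[OF assms(4,5) fh f0 Lf wf wfb, folded Hs_def]
  note cg = core[OF assms(4,5) gh g0 Lg wg wgb, folded Gs_def]
  have w2: "norm (fps_nth (fps_expansion \<omega> 0) 2) \<le> 1" using schwarz2 wf(1) wfb by blast
  have v2: "norm (fps_nth (fps_expansion \<nu> 0) 2) \<le> 1" using schwarz2 wg(1) wgb by blast
  note ic = inv_coeffs[OF HH GG Hs0 ev]
  have H1: "fps_nth Hs 1 = 1" using fps_nth_fps_expansion[OF HH, of 1] bu
    unfolding bi_univalent_with_def classA_def by simp
  have b1: "fps_nth Gs 1 = 1" using ic(1) H1 by simp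
  have b2: "fps_nth Gs 2 = - fps_nth Hs 2" using ic(2) H1 b1 by algebra
  have b3: "fps_nth Gs 3 = 2 * (fps_nth Hs 2)^2 - fps_nth Hs 3" using ic(3) H1 b1 b2 by algebra
  define M where "M = 2 * lam + mu + 6 * xi lam mu * del"
  have xi0: "xi lam mu \<ge> 0" unfolding xi_def using assms by simp
  have M0: "M > 0" unfolding M_def using assms xi0 by (smt (verit) mult_nonneg_nonneg)
  define a2 a3 w1 w2' v1 v2' where "a2 = fps_nth Hs 2" and "a3 = fps_nth Hs 3"
    and "w1 = fps_nth (fps_expansion \<omega> 0) 1" and "w2' = fps_nth (fps_expansion \<omega> 0) 2"
    and "v1 = fps_nth (fps_expansion \<nu> 0) 1" and "v2' = fps_nth (fps_expansion \<nu> 0) 2"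
  have t0: "of_real t \<noteq> (0::complex)" using assms by simp
  have "2 * of_real t * v1 = - (2 * of_real t * w1)"
    using cf(1) cg(1) b2 unfolding a2_def w1_def v1_def by (metis mult_minus_right)
  then have "(v1 + w1) * (2 * of_real t) = 0" by algebra
  then have "v1 + w1 = 0" using t0 by simp
  then have vw: "v1 = - w1" by (simp add: eq_neg_iff_add_eq_0)
  have e1: "of_real M * a3 + of_real ((mu + 2*lam)*(mu - 1)/2) * a2^2 = 2 * of_real t * w2' + of_real (4*t^2 - 1) * w1^2"
    using cf(2) unfolding M_def a2_def a3_def w1_def w2'_def by (simp add: algebra_simps)
  have e2: "of_real M * (2 * a2^2 - a3) + of_real ((mu + 2*lam)*(mu - 1)/2) * a2^2 = 2 * of_real t * v2' + of_real (4*t^2 - 1) * w1^2"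
    using cg(2) b2 b3 vw unfolding M_def a2_def a3_def w1_def v1_def v2'_def by (simp add: algebra_simps)
  have "of_real M * (a3 - a2^2) = of_real t * (w2' - v2')"
    using e1 e2 by algebra
  then have key: "a3 - a2^2 = of_real t * (w2' - v2') / of_real M" using M0
    by (simp add: eq_divide_eq mult.commute)
  have "norm (a3 - a2^2) = t * norm (w2' - v2') / M" unfolding key using assms M0
    by (simp add: norm_mult norm_divide)
  also have "\<dots> \<le> t * 2 / M"
  proof -
    have "norm (w2' - v2') \<le> 2" using w2 v2 norm_triangle_ineq4[of w2' v2'] unfolding w2'_def v2'_def by simp
    then show ?thesis using assms M0 by (simp add: divide_right_mono)
  qed
  finally have "norm (a3 - a2^2) \<le> 2 * t / M" by (simp add: mult.commute)
  moreover have "taylor_coeff f n = fps_nth Hs n" for n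
    unfolding taylor_coeff_def Hs_def fps_expansion_def by simp
  ultimately show ?thesis unfolding M_def a2_def a3_def by simp
qed

end
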